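(* Let $(X,d)$ be a metric space and $T:X\to X$ a map. Let $\varphi:[0,\infty)\to[0,\infty)$ be increasing (i.e. $t_1\le t_2\Rightarrow \varphi(t_1)\le\varphi(t_2)$) and suppose: (1) $\varphi$ is regressive: $\varphi(t)<t$ for all $t>0$; (2) $\varphi$ is Matkowski admissible: $\varphi^n(t)\to 0$ as $n\to\infty$ for every $t>0$, where $\varphi^n$ is the $n$-th iterate; (3) $\varphi$ is complement-coercive: $\lim_{t\to\infty}(t-\varphi(t))=\infty$. Assume $T$ is anticipative $(d;\varphi)$-contractive, i.e. for all $x,y\in X$, $$d(Tx,Ty)\le \varphi\big(\operatorname{diam}\{x,Tx,T^2x,y,Ty\}\big),$$ where $\operatorname{diam}(U)=\sup\{d(u,v);u,v\in U\}$. Assume $(X,d)$ is o-complete (every $d$-Cauchy orbital sequence is $d$-convergent), and that at least one of the following holds: (2a) $T$ is o-continuous: whenever $(x_n)$ is an orbital sequence with $x_n\to x$ in $d$, we have $Tx_n\to Tx$ in $d$; (2b) $\varphi$ is super regressive: $\varphi(s+0)<s$ for all $s>0$, where $\varphi(s+0)=\lim_{t\to s^+}\varphi(t)$. Then $T$ is globally strong Picard modulo $d$; that is, there is $z\in X$ with $\{x\in X: Tx=x\}=\{z\}$, and $T^nx\to z$ in $d$ as $n\to\infty$ for every $x\in X$.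
   Context: A sequence $(z_n)_{n\ge0}$ in $X$ is called orbital (modulo $T$) if it is a subsequence of $(T^nx)_{n\ge 0}$ for some $x\in X$. *)

theory Defs
  imports "HOL-Analysis.Analysis"
begin

definition orbital :: "('a \<Rightarrow> 'a) \<Rightarrow> (nat \<Rightarrow> 'a) \<Rightarrow> bool" where
  "orbital T z \<longleftrightarrow> (\<exists>x r. strict_mono r \<and> (\<forall>n. z n = (T ^^ r n) x))"

definition o_complete :: "('a::metric_space \<Rightarrow> 'a) \<Rightarrow> bool" where
  "o_complete T \<longleftrightarrow> (\<forall>z. orbital T z \<and> Cauchy z \<longrightarrow> convergent z)"

definition o_continuous :: "('a::metric_space \<Rightarrow> 'a) \<Rightarrow> bool" where
  "o_continuous T \<longleftrightarrow>
     (\<forall>z a. orbital T z \<and> z \<longlonglongrightarrow> a \<longrightarrow> (\<lambda>n. T (z n)) \<longlonglongrightarrow> T a)"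

definition anticipative_contractive :: "('a::metric_space \<Rightarrow> 'a) \<Rightarrow> (real \<Rightarrow> real) \<Rightarrow> bool" where
  "anticipative_contractive T \<phi> \<longleftrightarrow>
     (\<forall>x y. dist (T x) (T y) \<le> \<phi> (diameter {x, T x, T (T x), y, T y}))"

end

theory Submission
  imports Defs "HOL-Analysis.Analysis"
begin
lemma diam_le_metric:
  fixes S :: "'a::metric_space set"
  assumes "S \<noteq> {}" "\<And>x y. x \<in> S \<Longrightarrow> y \<in> S \<Longrightarrow> dist x y \<le> B"
  shows "diameter S \<le> B"
  using assms unfolding diameter_def by (auto intro!: cSUP_least)
lemma diam_ge_metric:
  fixes S :: "'a::metric_space set"
  assumes "finite S" "x \<in> S" "y \<in> S"
  shows "dist x y \<le> diameter S"
  using assms by (intro diameter_bounded_bound) (auto intro: finite_imp_bounded)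
lemma diam_nonneg_fin:
  fixes S :: "'a::metric_space set"
  assumes "finite S" shows "0 \<le> diameter S"
proof (cases "S = {}")
  case False then obtain x where "x \<in> S" by auto
  then show ?thesis using diam_ge_metric[OF assms, of x x] by simp
qed simp

lemma key:
  fixes T :: "'a::metric_space \<Rightarrow> 'a" and \<phi> :: "real \<Rightarrow> real"
  assumes phi_incr: "\<forall>t1 t2. 0 \<le> t1 \<and> t1 \<le> t2 \<longrightarrow> \<phi> t1 \<le> \<phi> t2"
    and contr: "anticipative_contractive T \<phi>"
    and pq: "p < q"
    and bd: "\<And>k l. p \<le> k \<Longrightarrow> k \<le> Suc q \<Longrightarrow> p \<le> l \<Longrightarrow> l \<le> Suc q \<Longrightarrow> dist ((T^^k) x) ((T^^l) x) \<le> B"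
  shows "dist ((T^^Suc p) x) ((T^^Suc q) x) \<le> \<phi> B"
proof -
  define S where "S = (\<lambda>k. (T^^k) x) ` {p, Suc p, Suc (Suc p), q, Suc q}"
  have S: "S = {(T^^p) x, T ((T^^p) x), T (T ((T^^p) x)), (T^^q) x, T ((T^^q) x)}"
    unfolding S_def by simp
  have fin: "finite S" unfolding S_def by simp
  have "diameter S \<le> B"
  proof (rule diam_le_metric)
    show "S \<noteq> {}" unfolding S_def by blast
    fix a b assume "a \<in> S" "b \<in> S"
    then obtain k l where kl: "k \<in> {p, Suc p, Suc (Suc p), q, Suc q}" "l \<in> {p, Suc p, Suc (Suc p), q, Suc q}"
       "a = (T^^k) x" "b = (T^^l) x" unfolding S_def by blast
    have "dist ((T^^k) x) ((T^^l) x) \<le> B" by (rule bd) (use kl pq in auto)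
    then show "dist a b \<le> B" using kl by simp
  qed
  moreover have "0 \<le> diameter S" by (rule diam_nonneg_fin[OF fin])
  ultimately have "\<phi> (diameter S) \<le> \<phi> B" using phi_incr by auto
  moreover have "dist (T ((T^^p) x)) (T ((T^^q) x)) \<le> \<phi> (diameter S)"
    using contr unfolding anticipative_contractive_def S by blast
  ultimately show ?thesis by simp
qed

lemma orbit_bounded:
  fixes T :: "'a::metric_space \<Rightarrow> 'a" and \<phi> :: "real \<Rightarrow> real"
  assumes phi_nonneg: "\<forall>t\<ge>0. \<phi> t \<ge> 0"
    and phi_incr: "\<forall>t1 t2. 0 \<le> t1 \<and> t1 \<le> t2 \<longrightarrow> \<phi> t1 \<le> \<phi> t2"
    and compl_coercive: "filterlim (\<lambda>t. t - \<phi> t) at_top at_top"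
    and contr: "anticipative_contractive T \<phi>"
  shows "\<exists>M\<ge>1. \<forall>i j. dist ((T^^i) x) ((T^^j) x) \<le> M"
proof -
  define xs where "xs = (\<lambda>k. (T^^k) x)"
  define a where "a = dist (xs 0) (xs 1)"
  have a0: "0 \<le> a" unfolding a_def by simp
  have "eventually (\<lambda>t. a + 1 \<le> t - \<phi> t) at_top"
    using compl_coercive unfolding filterlim_at_top by blast
  then obtain N where N: "\<And>t. t \<ge> N \<Longrightarrow> a + 1 \<le> t - \<phi> t"
    unfolding eventually_at_top_linorder by blast
  define M where "M = max N 1"
  have dn: "diameter (xs ` {..n}) < M" for n
  proof -
    define \<delta> where "\<delta> = diameter (xs ` {..n})"
    have fin: "finite (xs ` {..n})" by simp
    have d0: "0 \<le> \<delta>" unfolding \<delta>_def by (rule diam_nonneg_fin[OF fin])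
    have p0: "0 \<le> \<phi> \<delta>" using phi_nonneg d0 by auto
    have inn: "\<And>i j. i \<le> n \<Longrightarrow> j \<le> n \<Longrightarrow> dist (xs i) (xs j) \<le> \<delta>"
      unfolding \<delta>_def by (rule diam_ge_metric[OF fin]) auto
    have A: "dist (xs i) (xs j) \<le> \<phi> \<delta>" if h: "1 \<le> i" "i < j" "j \<le> n" for i j
    proof -
      obtain p q where pq: "i = Suc p" "j = Suc q" using h by (cases i; cases j) auto
      have "dist ((T^^Suc p) x) ((T^^Suc q) x) \<le> \<phi> \<delta>"
        by (rule key[OF phi_incr contr]) (use pq h in \<open>auto intro!: inn[unfolded xs_def]\<close>)
      then show ?thesis using pq xs_def by simp
    qed
    have B: "dist (xs i) (xs j) \<le> a + \<phi> \<delta>" if "i \<le> j" "j \<le> n" for i j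
    proof (cases "i = j")
      case True then show ?thesis using a0 p0 by simp
    next
      case False
      show ?thesis
      proof (cases "i = 0")
        case False
        then show ?thesis using A[of i j] that \<open>i \<noteq> j\<close> a0 by simp
      next
        case True
        show ?thesis
        proof (cases "j = 1")
          case True then show ?thesis using \<open>i = 0\<close> a_def p0 by simp
        next
          case False
          have "dist (xs 0) (xs j) \<le> dist (xs 0) (xs 1) + dist (xs 1) (xs j)"
            by (rule dist_triangle)
          moreover have "dist (xs 1) (xs j) \<le> \<phi> \<delta>" using A[of 1 j] False that \<open>i = 0\<close> \<open>i \<noteq> j\<close> by simp
          ultimately show ?thesis using True a_def by simp
        qed
      qed
    qed
    have "\<delta> \<le> a + \<phi> \<delta>"
      unfolding \<delta>_def
    proof (rule diam_le_metric)
      show "xs ` {..n} \<noteq> {}" by blast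
      fix u v assume "u \<in> xs ` {..n}" "v \<in> xs ` {..n}"
      then obtain i j where ij: "i \<le> n" "j \<le> n" "u = xs i" "v = xs j" by blast
      show "dist u v \<le> a + \<phi> (diameter (xs ` {..n}))"
      proof (cases "i \<le> j")
        case True then show ?thesis using B[of i j] ij \<delta>_def by simp
      next
        case False then show ?thesis using B[of j i] ij \<delta>_def by (simp add: dist_commute)
      qed
    qed
    then have "\<delta> < M"
      using N[of \<delta>] unfolding M_def by fastforce
    then show ?thesis unfolding \<delta>_def .
  qed
  have "dist ((T^^i) x) ((T^^j) x) \<le> M" for i j
  proof -
    have "dist (xs i) (xs j) \<le> diameter (xs ` {..max i j})"
      by (rule diam_ge_metric) auto
    then show ?thesis using dn[of "max i j"] xs_def by simp
  qed
  then show ?thesis unfolding M_def by (intro exI[of _ "max N 1"]) auto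
qed

lemma iter_nonneg:
  fixes \<phi> :: "real \<Rightarrow> real"
  assumes phi_nonneg: "\<forall>t\<ge>0. \<phi> t \<ge> 0" and "0 \<le> (M::real)"
  shows "0 \<le> (\<phi>^^k) M"
proof (induction k)
  case (Suc k) 
  have "(\<phi>^^Suc k) M = \<phi> ((\<phi>^^k) M)" by simp
  then show ?case using phi_nonneg Suc.IH by simp
qed (use assms in simp)

lemma orbit_cauchy:
  fixes T :: "'a::metric_space \<Rightarrow> 'a" and \<phi> :: "real \<Rightarrow> real"
  assumes phi_nonneg: "\<forall>t\<ge>0. \<phi> t \<ge> 0"
    and phi_incr: "\<forall>t1 t2. 0 \<le> t1 \<and> t1 \<le> t2 \<longrightarrow> \<phi> t1 \<le> \<phi> t2"
    and matkowski: "\<forall>t>0. (\<lambda>n. (\<phi> ^^ n) t) \<longlonglongrightarrow> 0"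
    and compl_coercive: "filterlim (\<lambda>t. t - \<phi> t) at_top at_top"
    and contr: "anticipative_contractive T \<phi>"
  shows "Cauchy (\<lambda>n. (T^^n) x)"
proof -
  obtain M where M: "M \<ge> 1" "\<And>i j. dist ((T^^i) x) ((T^^j) x) \<le> M"
    using orbit_bounded[OF phi_nonneg phi_incr compl_coercive contr] by blast
  have C: "\<forall>i j. k \<le> i \<longrightarrow> k \<le> j \<longrightarrow> dist ((T^^i) x) ((T^^j) x) \<le> (\<phi>^^k) M" for k
  proof (induction k)
    case 0 then show ?case using M by simp
  next
    case (Suc k)
    have nn: "0 \<le> (\<phi>^^k) M" "0 \<le> (\<phi>^^Suc k) M"
      using iter_nonneg[OF phi_nonneg, of M] M by (auto simp del: funpow.simps)
    have lt: "dist ((T^^i) x) ((T^^j) x) \<le> (\<phi>^^Suc k) M" if h: "Suc k \<le> i" "i < j" for i j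
    proof -
      obtain p q where pq: "i = Suc p" "j = Suc q" using h by (cases i; cases j) auto
      have "dist ((T^^Suc p) x) ((T^^Suc q) x) \<le> \<phi> ((\<phi>^^k) M)"
        by (rule key[OF phi_incr contr]) (use pq h Suc.IH in auto)
      then show ?thesis using pq by simp
    qed
    show ?case
    proof (intro allI impI)
      fix i j assume ij: "Suc k \<le> i" "Suc k \<le> j"
      consider "i = j" | "i < j" | "j < i" by linarith
      then show "dist ((T^^i) x) ((T^^j) x) \<le> (\<phi>^^Suc k) M"
      proof cases
        case 1 then show ?thesis using nn by simp
      next
        case 2 then show ?thesis using lt ij by blast
      next
        case 3 then show ?thesis using lt[of j i] ij by (simp add: dist_commute)
      qed
    qed
  qed
  show ?thesis
  proof (rule metric_CauchyI)
    fix e :: real assume e: "0 < e"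
    have "(\<lambda>n. (\<phi> ^^ n) M) \<longlonglongrightarrow> 0" using matkowski M by auto
    from order_tendstoD(2)[OF this e] obtain N where N: "\<And>n. n \<ge> N \<Longrightarrow> (\<phi> ^^ n) M < e"
      unfolding eventually_sequentially by blast
    show "\<exists>N. \<forall>m\<ge>N. \<forall>n\<ge>N. dist ((T^^m) x) ((T^^n) x) < e"
      using C[of N] N[of N] by (meson le_less_trans order_refl)
  qed
qed

lemma fixed_unique:
  fixes T :: "'a::metric_space \<Rightarrow> 'a" and \<phi> :: "real \<Rightarrow> real"
  assumes regressive: "\<forall>t>0. \<phi> t < t"
    and contr: "anticipative_contractive T \<phi>"
    and "T u = u" "T v = v"
  shows "u = v"
proof (rule ccontr)
  assume "u \<noteq> v"
  have S: "{u, T u, T (T u), v, T v} = {u, v}" using assms by auto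
  have "diameter {u, v} \<le> dist u v"
    by (rule diam_le_metric) (auto simp: dist_commute)
  moreover have "dist u v \<le> diameter {u,v}" by (rule diam_ge_metric) auto
  ultimately have d: "diameter {u,v} = dist u v" by simp
  have "dist (T u) (T v) \<le> \<phi> (diameter {u, T u, T (T u), v, T v})"
    using contr unfolding anticipative_contractive_def by blast
  then have "dist u v \<le> \<phi> (dist u v)" using S d assms by simp
  moreover have "\<phi> (dist u v) < dist u v" using regressive \<open>u \<noteq> v\<close> by simp
  ultimately show False by simp
qed

theorem theorem2:
  fixes T :: "'a::metric_space \<Rightarrow> 'a" and \<phi> :: "real \<Rightarrow> real"
  assumes phi_nonneg: "\<forall>t\<ge>0. \<phi> t \<ge> 0"
    and phi_incr: "\<forall>t1 t2. 0 \<le> t1 \<and> t1 \<le> t2 \<longrightarrow> \<phi> t1 \<le> \<phi> t2"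
    and regressive: "\<forall>t>0. \<phi> t < t"
    and matkowski: "\<forall>t>0. (\<lambda>n. (\<phi> ^^ n) t) \<longlonglongrightarrow> 0"
    and compl_coercive: "filterlim (\<lambda>t. t - \<phi> t) at_top at_top"
    and contr: "anticipative_contractive T \<phi>"
    and ocomplete: "o_complete T"
    and alt: "o_continuous T \<or> (\<forall>s>0. Lim (at_right s) \<phi> < s)"
  shows "\<exists>z. {x. T x = x} = {z} \<and> (\<forall>x. (\<lambda>n. (T ^^ n) x) \<longlonglongrightarrow> z)"
proof -
  have conv: "\<exists>z. T z = z \<and> (\<lambda>n. (T ^^ n) x) \<longlonglongrightarrow> z" for x
  proof -
    define xs where "xs = (\<lambda>n. (T ^^ n) x)"
    have orb: "orbital T xs" unfolding orbital_def xs_def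
      by (intro exI[of _ x] exI[of _ id]) (auto simp: strict_mono_def)
    have "Cauchy xs" unfolding xs_def
      by (rule orbit_cauchy[OF phi_nonneg phi_incr matkowski compl_coercive contr])
    then have "convergent xs" using ocomplete orb unfolding o_complete_def by blast
    then obtain z where lim: "xs \<longlonglongrightarrow> z" unfolding convergent_def by blast
    have xsS: "T (xs n) = xs (Suc n)" for n unfolding xs_def by simp
    have limS: "(\<lambda>n. xs (Suc n)) \<longlonglongrightarrow> z" using lim by (rule LIMSEQ_Suc)
    have "T z = z"
      using alt
    proof
      assume "o_continuous T"
      then have "(\<lambda>n. T (xs n)) \<longlonglongrightarrow> T z" using orb lim unfolding o_continuous_def by blast
      then have "(\<lambda>n. xs (Suc n)) \<longlonglongrightarrow> T z" using xsS by simp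
      then show "T z = z" using limS LIMSEQ_unique by blast
    next
      assume sr: "\<forall>s>0. Lim (at_right s) \<phi> < s"
      show "T z = z"
      proof (rule ccontr)
        assume "T z \<noteq> z"
        define s where "s = dist z (T z)"
        have s0: "0 < s" unfolding s_def using \<open>T z \<noteq> z\<close> by simp
        define e where "e = (\<lambda>n. dist (xs n) z + dist (xs (Suc n)) z + dist (xs (Suc (Suc n))) z)"
        have l1: "(\<lambda>n. dist (xs n) z) \<longlonglongrightarrow> 0" using tendsto_dist[OF lim tendsto_const, of z] by simp
        have l2: "(\<lambda>n. dist (xs (Suc n)) z) \<longlonglongrightarrow> 0" using LIMSEQ_Suc[OF l1] .
        have l3: "(\<lambda>n. dist (xs (Suc (Suc n))) z) \<longlonglongrightarrow> 0" using LIMSEQ_Suc[OF l2] .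
        have el: "(\<lambda>n. 2 * e n) \<longlonglongrightarrow> 0" unfolding e_def
          using tendsto_mult[OF tendsto_const tendsto_add[OF tendsto_add[OF l1 l2] l3], of 2] by simp
        have e0: "0 \<le> e n" for n unfolding e_def by simp
        have bnd: "dist (xs (Suc n)) (T z) \<le> \<phi> (s + 2 * e n)" for n
        proof -
          define S where "S = {xs n, T (xs n), T (T (xs n)), z, T z}"
          have c: "dist u z \<le> e n \<or> u = T z" if "u \<in> S" for u
            using that unfolding S_def e_def xsS by auto
          have "diameter S \<le> s + 2 * e n"
          proof (rule diam_le_metric)
            show "S \<noteq> {}" unfolding S_def by blast
            fix u v assume uv: "u \<in> S" "v \<in> S"
            have tz: "dist z (T z) = s" unfolding s_def by simp
            show "dist u v \<le> s + 2 * e n"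
            proof (cases "u = T z")
              case True
              then show ?thesis
              proof (cases "v = T z")
                case False
                then have "dist v z \<le> e n" using c uv by blast
                moreover have "dist u v \<le> dist u z + dist v z" by (rule dist_triangle2)
                ultimately show ?thesis using True tz e0[of n] by (simp add: dist_commute)
              qed (use s0 e0[of n] in simp)
            next
              case False
              then have du: "dist u z \<le> e n" using c uv by blast
              have "dist u v \<le> dist u z + dist v z" by (rule dist_triangle2)
              moreover have "dist v z \<le> e n \<or> dist v z = s" using c[OF uv(2)] tz by (auto simp: dist_commute)
              ultimately show ?thesis using du e0[of n] s0 by linarith
            qed
          qed
          moreover have "0 \<le> diameter S" by (rule diam_nonneg_fin) (simp add: S_def)
          ultimately have "\<phi> (diameter S) \<le> \<phi> (s + 2 * e n)" using phi_incr by auto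
          moreover have "dist (T (xs n)) (T z) \<le> \<phi> (diameter S)"
            using contr unfolding anticipative_contractive_def S_def by blast
          ultimately show ?thesis using xsS by simp
        qed
        have ge: "s \<le> \<phi> (s + \<epsilon>)" if "\<epsilon> > 0" for \<epsilon>
        proof -
          have "eventually (\<lambda>n. 2 * e n < \<epsilon>) sequentially"
            using order_tendstoD(2)[OF el that] .
          then have ev: "eventually (\<lambda>n. dist (xs (Suc n)) (T z) \<le> \<phi> (s + \<epsilon>)) sequentially"
          proof eventually_elim
            case (elim n)
            have "\<phi> (s + 2 * e n) \<le> \<phi> (s + \<epsilon>)" using phi_incr elim s0 e0[of n] by auto
            then show ?case using bnd[of n] by simp
          qed
          have "(\<lambda>n. dist (xs (Suc n)) (T z)) \<longlonglongrightarrow> dist z (T z)"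
            by (intro tendsto_dist limS tendsto_const)
          from tendsto_upperbound[OF this ev] show ?thesis unfolding s_def by simp
        qed
        have "(\<phi> \<longlongrightarrow> Inf (\<phi> ` ({s<..} \<inter> UNIV))) (at s within ({s<..} \<inter> UNIV))"
          by (rule Lim_right_bound[where K=0]) (use phi_incr phi_nonneg s0 in auto)
        then have tl: "(\<phi> \<longlongrightarrow> Inf (\<phi> ` {s<..})) (at_right s)" by simp
        then have "Lim (at_right s) \<phi> = Inf (\<phi> ` {s<..})"
          by (intro tendsto_Lim) auto
        moreover have "s \<le> Inf (\<phi> ` {s<..})"
        proof (rule tendsto_lowerbound[OF tl])
          show "eventually (\<lambda>t. s \<le> \<phi> t) (at_right s)"
            using eventually_at_right_less[of s]
          proof eventually_elim
            case (elim t) then show ?case using ge[of "t - s"] by simp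
          qed
        qed simp
        ultimately show False using sr s0 by fastforce
      qed
    qed
    then show ?thesis using lim xs_def by blast
  qed
  obtain z where z: "T z = z" using conv by blast
  have "{x. T x = x} = {z}" using z fixed_unique[OF regressive contr] by blast
  moreover have "(\<lambda>n. (T ^^ n) x) \<longlonglongrightarrow> z" for x
    using conv[of x] z fixed_unique[OF regressive contr] by blast
  ultimately show ?thesis by blast
qed
end
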